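(* Let $S(t,p,q)=\sum_{\pi}t^{|\pi|}p^{\mathrm{asc}(\pi)}q^{\mathrm{des}(\pi)}$, summed over all separable permutations $\pi$, and let $I(t,p,q)$ be the same sum restricted to irreducible separable permutations. Then $$pq\,S(t,p,q)^3+pq\,t\,S(t,p,q)^2+S(t,p,q)\bigl((p+q)t-1\bigr)+t=0$$ and $$I(t,p,q)=\frac{t+q\,(t+S(t,p,q))\,S(t,p,q)}{1+q\,S(t,p,q)}.$$
   Context: A permutation of length $n$ is a word $\pi=\pi_1\cdots\pi_n$ containing each element of $[n]$ exactly once; $|\pi|=n$. For $\pi$ of length $m$ and $\sigma$ of length $n$, $\pi\oplus\sigma=\pi_1\cdots\pi_m(\sigma_1+m)\cdots(\sigma_n+m)$ and $\pi\ominus\sigma=(\pi_1+n)\cdots(\pi_m+n)\sigma_1\cdots\sigma_n$. Separable permutations are the permutations of length $\ge1$ obtained from the permutation $1$ by repeatedly applying $\oplus$ and $\ominus$ (equivalently, those avoiding $2413$ and $3142$). The permutation $1$ is irreducible; a permutation of length $n\ge2$ is irreducible if there is no $i$ with $2\le i\le n$ such that every element of $\pi_1\cdots\pi_{i-1}$ is less than every element of $\pi_i\cdots\pi_n$. $\mathrm{asc}(\pi)=\#\{i<n:\pi_i<\pi_{i+1}\}$, $\mathrm{des}(\pi)=\#\{i<n:\pi_i>\pi_{i+1}\}$. *)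

theory Defs
  imports "HOL-Computational_Algebra.Formal_Power_Series"
begin

definition is_perm :: "nat list \<Rightarrow> bool" where
  "is_perm xs \<longleftrightarrow> distinct xs \<and> set xs = {1..length xs}"

definition dsum :: "nat list \<Rightarrow> nat list \<Rightarrow> nat list" where
  "dsum xs ys = xs @ map (\<lambda>y. y + length xs) ys"

definition skewsum :: "nat list \<Rightarrow> nat list \<Rightarrow> nat list" where
  "skewsum xs ys = map (\<lambda>x. x + length ys) xs @ ys"

inductive separable :: "nat list \<Rightarrow> bool" where
  sep_one: "separable [1]"
| sep_dsum: "separable xs \<Longrightarrow> separable ys \<Longrightarrow> separable (dsum xs ys)"
| sep_skew: "separable xs \<Longrightarrow> separable ys \<Longrightarrow> separable (skewsum xs ys)"

definition irreducible_perm :: "nat list \<Rightarrow> bool" where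
  "irreducible_perm xs \<longleftrightarrow> xs = [1] \<or>
     (length xs \<ge> 2 \<and>
      \<not> (\<exists>i. 2 \<le> i \<and> i \<le> length xs \<and>
            (\<forall>a\<in>set (take (i - 1) xs). \<forall>b\<in>set (drop (i - 1) xs). a < b)))"

definition asc :: "nat list \<Rightarrow> nat" where
  "asc xs = card {i. Suc i < length xs \<and> xs ! i < xs ! Suc i}"

definition des :: "nat list \<Rightarrow> nat" where
  "des xs = card {i. Suc i < length xs \<and> xs ! i > xs ! Suc i}"

definition sep_gf :: "'a::comm_ring_1 \<Rightarrow> 'a \<Rightarrow> 'a fps" where
  "sep_gf p q = Abs_fps (\<lambda>n. \<Sum>xs\<in>{xs. separable xs \<and> length xs = n}.
                                 p ^ asc xs * q ^ des xs)"

definition irr_sep_gf :: "'a::comm_ring_1 \<Rightarrow> 'a \<Rightarrow> 'a fps" where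
  "irr_sep_gf p q = Abs_fps (\<lambda>n. \<Sum>xs\<in>{xs. separable xs \<and> irreducible_perm xs \<and> length xs = n}.
                                 p ^ asc xs * q ^ des xs)"

end

theory Submission
  imports Defs
begin

unbundle fps_syntax



fun cnt :: "(nat \<Rightarrow> nat \<Rightarrow> bool) \<Rightarrow> nat list \<Rightarrow> nat" where
  "cnt R (x # y # zs) = (if R x y then 1 else 0) + cnt R (y # zs)"
| "cnt R _ = 0"

lemma cnt_card: "card {i. Suc i < length xs \<and> R (xs ! i) (xs ! Suc i)} = cnt R xs"
proof (induction R xs rule: cnt.induct)
  case (1 R x y zs)
  have "{i. Suc i < length (x # y # zs) \<and> R ((x # y # zs) ! i) ((x # y # zs) ! Suc i)}
      = (if R x y then {0} else {}) \<union> Suc ` {i. Suc i < length (y # zs) \<and> R ((y # zs) ! i) ((y # zs) ! Suc i)}"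
    apply (auto simp: image_iff split: if_splits)
    apply (case_tac xa; auto)+
    done
  moreover have "card (Suc ` {i. Suc i < length (y # zs) \<and> R ((y # zs) ! i) ((y # zs) ! Suc i)})
     = cnt R (y # zs)" using 1 by (simp add: card_image)
  ultimately show ?case by (auto simp: card_insert_if)
next
  case ("2_1" R)
  then show ?case by simp
next
  case ("2_2" R v)
  then show ?case by simp
qed

lemma asc_cnt: "asc xs = cnt (<) xs" unfolding asc_def cnt_card ..
lemma des_cnt: "des xs = cnt (>) xs" unfolding des_def cnt_card[symmetric] by simp

lemma cnt_append: "xs \<noteq> [] \<Longrightarrow> ys \<noteq> [] \<Longrightarrow>
  cnt R (xs @ ys) = cnt R xs + cnt R ys + (if R (last xs) (hd ys) then 1 else 0)"
proof (induction R xs rule: cnt.induct)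
  case (1 R x y zs)
  then show ?case by simp
next
  case ("2_2" R v)
  then show ?case by (cases ys) auto
qed simp

lemma cnt_map: "(\<And>a b. a \<in> set xs \<Longrightarrow> b \<in> set xs \<Longrightarrow> R (f a) (f b) = R' a b) \<Longrightarrow>
   cnt R (map f xs) = cnt R' xs"
  by (induction R' xs rule: cnt.induct) auto

lemma perm_bounds: "is_perm xs \<Longrightarrow> x \<in> set xs \<Longrightarrow> 1 \<le> x \<and> x \<le> length xs"
  unfolding is_perm_def by auto

lemma is_perm_dsum: "is_perm xs \<Longrightarrow> is_perm ys \<Longrightarrow> is_perm (dsum xs ys)"
  unfolding is_perm_def dsum_def
  apply (auto simp: distinct_map inj_on_def)
  done

lemma is_perm_skewsum: "is_perm xs \<Longrightarrow> is_perm ys \<Longrightarrow> is_perm (skewsum xs ys)"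
  unfolding is_perm_def skewsum_def
  apply (auto simp: distinct_map inj_on_def)
  done

lemma sep_perm: "separable xs \<Longrightarrow> is_perm xs \<and> xs \<noteq> []"
  by (induction rule: separable.induct)
     (auto simp: is_perm_dsum is_perm_skewsum, auto simp: is_perm_def dsum_def skewsum_def)




lemma cnt_shift_less: "cnt (<) (map (\<lambda>y. y + c) xs) = cnt (<) xs"
  by (rule cnt_map) auto
lemma cnt_shift_gr: "cnt (>) (map (\<lambda>y. y + c) xs) = cnt (>) xs"
  by (rule cnt_map) auto

lemma asc_dsum: "is_perm a \<Longrightarrow> is_perm b \<Longrightarrow> a \<noteq> [] \<Longrightarrow> b \<noteq> [] \<Longrightarrow>
   asc (dsum a b) = asc a + asc b + 1"
proof -
  assume a: "is_perm a" "is_perm b" "a \<noteq> []" "b \<noteq> []"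
  have "last a \<le> length a" using perm_bounds[OF a(1) last_in_set[OF a(3)]] by simp
  moreover have "1 \<le> hd b" using perm_bounds[OF a(2) hd_in_set[OF a(4)]] by simp
  ultimately show ?thesis using a
    by (simp add: asc_cnt dsum_def cnt_append cnt_shift_less hd_map)
qed

lemma des_dsum: "is_perm a \<Longrightarrow> is_perm b \<Longrightarrow> a \<noteq> [] \<Longrightarrow> b \<noteq> [] \<Longrightarrow>
   des (dsum a b) = des a + des b"
proof -
  assume a: "is_perm a" "is_perm b" "a \<noteq> []" "b \<noteq> []"
  have "last a \<le> length a" using perm_bounds[OF a(1) last_in_set[OF a(3)]] by simp
  moreover have "1 \<le> hd b" using perm_bounds[OF a(2) hd_in_set[OF a(4)]] by simp
  ultimately show ?thesis using a
    by (simp add: des_cnt dsum_def cnt_append cnt_shift_gr hd_map)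
qed

lemma skew_irr: "is_perm u \<Longrightarrow> is_perm v \<Longrightarrow> u \<noteq> [] \<Longrightarrow> v \<noteq> [] \<Longrightarrow>
   irreducible_perm (skewsum u v)"
proof -
  assume a: "is_perm u" "is_perm v" "u \<noteq> []" "v \<noteq> []"
  let ?xs = "skewsum u v"
  have len: "length ?xs = length u + length v" by (simp add: skewsum_def)
  have h: "hd ?xs = hd u + length v" using a(3) by (simp add: skewsum_def hd_map)
  have l: "last ?xs = last v" using a(4) by (simp add: skewsum_def)
  have "last v \<le> length v" using perm_bounds[OF a(2) last_in_set[OF a(4)]] by simp
  have "1 \<le> hd u" using perm_bounds[OF a(1) hd_in_set[OF a(3)]] by simp
  have ne: "?xs \<noteq> []" using len a by auto
  have "\<not> (\<forall>x\<in>set (take (i - 1) ?xs). \<forall>y\<in>set (drop (i - 1) ?xs). x < y)"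
    if "2 \<le> i" "i \<le> length ?xs" for i
  proof -
    have "hd ?xs \<in> set (take (i - 1) ?xs)"
    proof -
      have "take (i - 1) ?xs \<noteq> []" using that ne by simp
      moreover have "hd (take (i - 1) ?xs) = hd ?xs" using that by simp
      ultimately show ?thesis by (metis hd_in_set)
    qed
    moreover have "last ?xs \<in> set (drop (i - 1) ?xs)"
    proof -
      have "drop (i - 1) ?xs \<noteq> []" using that ne by simp
      moreover have "last (drop (i - 1) ?xs) = last ?xs" using that by simp
      ultimately show ?thesis by (metis last_in_set)
    qed
    ultimately show ?thesis using h l \<open>last v \<le> length v\<close> \<open>1 \<le> hd u\<close> by fastforce
  qed
  moreover have "2 \<le> length ?xs" using len a by (cases u; cases v; auto)
  ultimately show ?thesis unfolding irreducible_perm_def by blast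
qed

lemma dsum_not_irr: "is_perm u \<Longrightarrow> is_perm v \<Longrightarrow> u \<noteq> [] \<Longrightarrow> v \<noteq> [] \<Longrightarrow>
   \<not> irreducible_perm (dsum u v)"
proof -
  assume a: "is_perm u" "is_perm v" "u \<noteq> []" "v \<noteq> []"
  let ?xs = "dsum u v"
  have len: "length ?xs = length u + length v" by (simp add: dsum_def)
  have "\<forall>x\<in>set (take (Suc (length u) - 1) ?xs). \<forall>y\<in>set (drop (Suc (length u) - 1) ?xs). x < y"
    using perm_bounds[OF a(1)] perm_bounds[OF a(2)] by (fastforce simp: dsum_def)
  moreover have "2 \<le> Suc (length u)" "Suc (length u) \<le> length ?xs" using a len
    by (auto simp: Suc_le_eq)
  moreover have "?xs \<noteq> [1]" using len a by (cases u; cases v; auto)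
  ultimately show ?thesis unfolding irreducible_perm_def by blast
qed

lemma dsum_assoc: "dsum (dsum a w) v = dsum a (dsum w v)"
  by (simp add: dsum_def add.assoc)

lemma sep_decomp: "separable xs \<Longrightarrow> \<not> irreducible_perm xs \<Longrightarrow>
  \<exists>a b. separable a \<and> irreducible_perm a \<and> separable b \<and> xs = dsum a b"
proof (induction rule: separable.induct)
  case sep_one
  then show ?case by (simp add: irreducible_perm_def)
next
  case (sep_dsum u v)
  show ?case
  proof (cases "irreducible_perm u")
    case True
    then show ?thesis using sep_dsum by blast
  next
    case False
    then obtain a w where "separable a" "irreducible_perm a" "separable w" "u = dsum a w"
      using sep_dsum by blast
    then show ?thesis using sep_dsum(2) separable.sep_dsum dsum_assoc by metis
  qed
next
  case (sep_skew u v)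
  then show ?case using skew_irr sep_perm by blast
qed

lemma irr_no_prefix: "irreducible_perm a' \<Longrightarrow> a' = a @ c \<Longrightarrow> a \<noteq> [] \<Longrightarrow> c \<noteq> [] \<Longrightarrow>
  is_perm a \<Longrightarrow> \<forall>y\<in>set c. y > length a \<Longrightarrow> False"
proof -
  assume a: "irreducible_perm a'" "a' = a @ c" "a \<noteq> []" "c \<noteq> []" "is_perm a" "\<forall>y\<in>set c. y > length a"
  have "length a' \<ge> 2" using a by (cases a; cases c; auto)
  hence "a' \<noteq> [1]" by auto
  moreover have "2 \<le> Suc (length a)" "Suc (length a) \<le> length a'" using a by (cases a; cases c; auto)+
  moreover have "\<forall>x\<in>set (take (Suc (length a) - 1) a'). \<forall>y\<in>set (drop (Suc (length a) - 1) a'). x < y"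
    using a perm_bounds[OF a(5)] by fastforce
  ultimately show False using a(1) unfolding irreducible_perm_def by blast
qed

lemma dsum_inj: "irreducible_perm a \<Longrightarrow> irreducible_perm a' \<Longrightarrow> is_perm a \<Longrightarrow> is_perm a' \<Longrightarrow>
  a \<noteq> [] \<Longrightarrow> a' \<noteq> [] \<Longrightarrow> dsum a b = dsum a' b' \<Longrightarrow> is_perm b \<Longrightarrow> is_perm b' \<Longrightarrow> a = a' \<and> b = b'"
proof -
  have key: "length a \<ge> length a'" if "irreducible_perm a'" "is_perm a" "a \<noteq> []"
     "dsum a b = dsum a' b'" "is_perm b" for a a' b b'
  proof (rule ccontr)
    assume "\<not> length a \<ge> length a'"
    hence lt: "length a < length a'" by simp
    have "length a + length b = length a' + length b'"
      using arg_cong[OF that(4), of length] by (simp add: dsum_def)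
    let ?c = "take (length a' - length a) (map (\<lambda>y. y + length a) b)"
    have "a' = take (length a') (dsum a b)" using that(4) by (simp add: dsum_def)
    also have "\<dots> = a @ ?c" using lt by (simp add: dsum_def)
    finally have "a' = a @ ?c" .
    moreover have "?c \<noteq> []" using lt \<open>length a + length b = length a' + length b'\<close> by auto
    moreover have "\<forall>y\<in>set ?c. y > length a"
      using perm_bounds[OF that(5)] by (auto dest!: in_set_takeD) (metis Suc_le_eq)
    ultimately show False using irr_no_prefix that by blast
  qed
  assume a: "irreducible_perm a" "irreducible_perm a'" "is_perm a" "is_perm a'"
    "a \<noteq> []" "a' \<noteq> []" "dsum a b = dsum a' b'" "is_perm b" "is_perm b'"
  have "length a = length a'" using key[of a' a b b'] key[of a a' b' b] a by auto
  moreover have "a = take (length a) (dsum a b)" "a' = take (length a') (dsum a' b')"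
    by (simp_all add: dsum_def)
  ultimately have "a = a'" using a(7) by simp
  moreover have "map (\<lambda>y. y + length a) b = map (\<lambda>y. y + length a) b'"
    using a(7) \<open>length a = length a'\<close> by (simp add: dsum_def \<open>a = a'\<close>)
  moreover have "inj (\<lambda>y::nat. y + length a)" by (rule injI) simp
  ultimately show ?thesis using inj_map_eq_map by blast
qed




definition cmpl :: "nat list \<Rightarrow> nat list" where
  "cmpl xs = map (\<lambda>x. Suc (length xs) - x) xs"

lemma length_comp[simp]: "length (cmpl xs) = length xs"
  by (simp add: cmpl_def)

lemma cmpl_dsum: "is_perm u \<Longrightarrow> is_perm v \<Longrightarrow> cmpl (dsum u v) = skewsum (cmpl u) (cmpl v)"
proof -
  assume a: "is_perm u" "is_perm v"
  have "\<forall>x\<in>set u. x \<le> length u" "\<forall>x\<in>set v. x \<le> length v"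
    using perm_bounds[OF a(1)] perm_bounds[OF a(2)] by auto
  then show ?thesis by (auto simp: cmpl_def dsum_def skewsum_def)
qed

lemma cmpl_skew: "is_perm u \<Longrightarrow> is_perm v \<Longrightarrow> cmpl (skewsum u v) = dsum (cmpl u) (cmpl v)"
proof -
  assume a: "is_perm u" "is_perm v"
  have "\<forall>x\<in>set u. x \<le> length u" "\<forall>x\<in>set v. x \<le> length v"
    using perm_bounds[OF a(1)] perm_bounds[OF a(2)] by auto
  then show ?thesis by (auto simp: cmpl_def dsum_def skewsum_def)
qed

lemma sep_comp: "separable xs \<Longrightarrow> separable (cmpl xs)"
proof (induction rule: separable.induct)
  case sep_one
  then show ?case using separable.sep_one by (simp add: cmpl_def)
next
  case (sep_dsum xs ys)
  then show ?case using cmpl_dsum sep_perm separable.sep_skew by metis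
next
  case (sep_skew xs ys)
  then show ?case using cmpl_skew sep_perm separable.sep_dsum by metis
qed

lemma cmpl_comp: "is_perm xs \<Longrightarrow> cmpl (cmpl xs) = xs"
proof -
  assume a: "is_perm xs"
  have "\<forall>x\<in>set xs. x \<le> length xs" using perm_bounds[OF a] by auto
  then show ?thesis by (auto simp: cmpl_def intro!: map_idI)
qed

lemma asc_comp: "is_perm xs \<Longrightarrow> asc (cmpl xs) = des xs"
  unfolding asc_cnt des_cnt cmpl_def
  by (rule cnt_map) (auto dest: perm_bounds)

lemma des_comp: "is_perm xs \<Longrightarrow> des (cmpl xs) = asc xs"
  unfolding asc_cnt des_cnt cmpl_def
  by (rule cnt_map) (auto dest: perm_bounds)

lemma dichotomy: assumes "separable xs" shows "irreducible_perm xs \<or> irreducible_perm (cmpl xs)"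
  using assms proof (cases rule: separable.cases)
  case sep_one
  then show ?thesis by (simp add: irreducible_perm_def)
next
  case (sep_dsum u v)
  then show ?thesis using cmpl_dsum skew_irr sep_perm sep_comp by metis
next
  case (sep_skew u v)
  then show ?thesis using skew_irr sep_perm by metis
qed

lemma both_irr: assumes "separable xs" "irreducible_perm xs" "irreducible_perm (cmpl xs)" shows "xs = [1]"
  using assms(1) proof (cases rule: separable.cases)
  case sep_one
  then show ?thesis by blast
next
  case (sep_dsum u v)
  then show ?thesis using dsum_not_irr sep_perm assms by metis
next
  case (sep_skew u v)
  then show ?thesis using cmpl_skew dsum_not_irr sep_perm sep_comp assms by metis
qed





definition w :: "'a::comm_ring_1 \<Rightarrow> 'a \<Rightarrow> nat list \<Rightarrow> 'a" where
  "w p q xs = p ^ asc xs * q ^ des xs"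

definition SepN :: "nat \<Rightarrow> nat list set" where
  "SepN n = {xs. separable xs \<and> length xs = n}"
definition IrrN :: "nat \<Rightarrow> nat list set" where
  "IrrN n = {xs. separable xs \<and> irreducible_perm xs \<and> length xs = n}"
definition JN :: "nat \<Rightarrow> nat list set" where
  "JN n = {xs. separable xs \<and> irreducible_perm (cmpl xs) \<and> length xs = n}"

lemma finite_SepN: "finite (SepN n)"
proof (rule finite_subset)
  show "SepN n \<subseteq> {xs. set xs \<subseteq> {1..n} \<and> length xs = n}"
    unfolding SepN_def using sep_perm by (auto simp: is_perm_def)
  show "finite {xs. set xs \<subseteq> {1..n} \<and> length xs = n}" by (rule finite_lists_length_eq) simp
qed

lemma finite_IrrN: "finite (IrrN n)"
  by (rule finite_subset[OF _ finite_SepN[of n]]) (auto simp: SepN_def IrrN_def)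
lemma finite_JN: "finite (JN n)"
  by (rule finite_subset[OF _ finite_SepN[of n]]) (auto simp: SepN_def JN_def)

lemma w_dsum: "separable a \<Longrightarrow> separable b \<Longrightarrow> w p q (dsum a b) = p * (w p q a * w p q b)"
  using sep_perm[of a] sep_perm[of b]
  by (simp add: w_def asc_dsum des_dsum power_add algebra_simps)

lemma sep_gf_nth: "sep_gf p q $ n = sum (w p q) (SepN n)"
  by (simp add: sep_gf_def w_def SepN_def)
lemma irr_gf_nth: "irr_sep_gf p q $ n = sum (w p q) (IrrN n)"
  by (simp add: irr_sep_gf_def w_def IrrN_def)

lemma coeff_decomp:
  "sum (w p q) (SepN n) = sum (w p q) (IrrN n)
     + p * (\<Sum>k=0..n. sum (w p q) (IrrN k) * sum (w p q) (SepN (n - k)))"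
proof -
  define Dn where "Dn = {xs. separable xs \<and> \<not> irreducible_perm xs \<and> length xs = n}"
  define P where "P = (\<Union>k\<in>{0..n}. IrrN k \<times> SepN (n - k))"
  have split: "SepN n = IrrN n \<union> Dn" "IrrN n \<inter> Dn = {}"
    by (auto simp: SepN_def IrrN_def Dn_def)
  have finD: "finite Dn" by (rule finite_subset[OF _ finite_SepN[of n]]) (auto simp: SepN_def Dn_def)
  have "(\<Sum>k=0..n. sum (w p q) (IrrN k) * sum (w p q) (SepN (n - k)))
      = (\<Sum>k=0..n. \<Sum>ab\<in>IrrN k \<times> SepN (n - k). w p q (fst ab) * w p q (snd ab))"
    by (simp add: sum_product sum.cartesian_product case_prod_beta)
  also have "\<dots> = (\<Sum>ab\<in>P. w p q (fst ab) * w p q (snd ab))"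
    unfolding P_def
    by (rule sum.UNION_disjoint[symmetric]) (simp_all add: finite_IrrN finite_SepN, auto simp: IrrN_def)
  finally have eq1: "(\<Sum>k=0..n. sum (w p q) (IrrN k) * sum (w p q) (SepN (n - k)))
      = (\<Sum>ab\<in>P. w p q (fst ab) * w p q (snd ab))" .
  have bij: "bij_betw (\<lambda>ab. dsum (fst ab) (snd ab)) P Dn"
  proof (rule bij_betwI')
    fix x y assume "x \<in> P" "y \<in> P"
    then have h: "separable (fst x)" "irreducible_perm (fst x)" "separable (snd x)"
       "separable (fst y)" "irreducible_perm (fst y)" "separable (snd y)"
      unfolding P_def IrrN_def SepN_def by auto
    show "(dsum (fst x) (snd x) = dsum (fst y) (snd y)) = (x = y)"
    proof
      assume "dsum (fst x) (snd x) = dsum (fst y) (snd y)"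
      then have "fst x = fst y \<and> snd x = snd y"
        using dsum_inj[of "fst x" "fst y" "snd x" "snd y"] h sep_perm by blast
      then show "x = y" by (simp add: prod_eq_iff)
    qed simp
  next
    fix x assume "x \<in> P"
    then obtain k where k: "k \<le> n" "fst x \<in> IrrN k" "snd x \<in> SepN (n - k)"
      unfolding P_def by auto
    then have h: "separable (fst x)" "separable (snd x)" "length (fst x) = k" "length (snd x) = n - k"
      unfolding IrrN_def SepN_def by auto
    then show "dsum (fst x) (snd x) \<in> Dn"
      unfolding Dn_def using k(1) dsum_not_irr[of "fst x" "snd x"] sep_perm separable.sep_dsum
      by (auto simp: dsum_def)
  next
    fix y assume "y \<in> Dn"
    then obtain a b where ab: "separable a" "irreducible_perm a" "separable b" "y = dsum a b"
      "length y = n"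
      unfolding Dn_def using sep_decomp by blast
    then have "length a \<le> n" "length b = n - length a" by (auto simp: dsum_def)
    then have "(a, b) \<in> P" unfolding P_def IrrN_def SepN_def using ab by auto
    then show "\<exists>x\<in>P. y = dsum (fst x) (snd x)" using ab(4) by (intro bexI[of _ "(a, b)"]) auto
  qed
  have eq2: "p * (\<Sum>ab\<in>P. w p q (fst ab) * w p q (snd ab)) = sum (w p q) Dn"
  proof -
    have "p * (\<Sum>ab\<in>P. w p q (fst ab) * w p q (snd ab)) = (\<Sum>ab\<in>P. w p q (dsum (fst ab) (snd ab)))"
      unfolding sum_distrib_left
      by (rule sum.cong) (auto simp: P_def IrrN_def SepN_def w_dsum)
    also have "\<dots> = sum (w p q) Dn" by (rule sum.reindex_bij_betw[OF bij])
    finally show ?thesis .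
  qed
  have "sum (w p q) (SepN n) = sum (w p q) (IrrN n) + sum (w p q) Dn"
    unfolding split(1) by (rule sum.union_disjoint[OF finite_IrrN finD split(2)])
  then show ?thesis by (simp only: eq1 eq2)
qed

lemma fps_decomp: "sep_gf p q = irr_sep_gf p q + fps_const p * irr_sep_gf p q * sep_gf p q"
proof (rule fps_ext)
  fix n
  have B: "(fps_const p * irr_sep_gf p q * sep_gf p q) $ n
     = p * (\<Sum>k=0..n. irr_sep_gf p q $ k * sep_gf p q $ (n - k))"
    unfolding mult.assoc fps_mult_left_const_nth by (simp only: fps_mult_nth)
  have A: "sep_gf p q $ n = irr_sep_gf p q $ n + p * (\<Sum>k=0..n. irr_sep_gf p q $ k * sep_gf p q $ (n - k))"
    unfolding sep_gf_nth irr_gf_nth by (rule coeff_decomp)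
  show "sep_gf p q $ n = (irr_sep_gf p q + fps_const p * irr_sep_gf p q * sep_gf p q) $ n"
    unfolding fps_add_nth B by (rule A)
qed

lemma sep_gf_swap: "sep_gf q p = (sep_gf p q :: 'a::comm_ring_1 fps)"
proof (rule fps_ext)
  fix n
  have "sum (w q p) (SepN n) = sum (w p q) (SepN n)"
  proof (rule sum.reindex_bij_witness[where i=cmpl and j=cmpl])
    fix a assume "a \<in> SepN n"
    then show "cmpl (cmpl a) = a" "cmpl a \<in> SepN n" "w p q (cmpl a) = w q p a"
      unfolding SepN_def using cmpl_comp sep_perm sep_comp asc_comp des_comp
      by (auto simp: w_def mult.commute)
  next
    fix a assume "a \<in> SepN n"
    then show "cmpl (cmpl a) = a" "cmpl a \<in> SepN n"
      unfolding SepN_def using cmpl_comp sep_perm sep_comp by auto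
  qed
  then show "sep_gf q p $ n = sep_gf p q $ n" by (simp add: sep_gf_nth)
qed

definition J :: "'a::comm_ring_1 \<Rightarrow> 'a \<Rightarrow> 'a fps" where
  "J p q = Abs_fps (\<lambda>n. sum (w p q) (JN n))"

lemma irr_swap: "irr_sep_gf q p = J p q"
proof (rule fps_ext)
  fix n
  have "sum (w q p) (IrrN n) = sum (w p q) (JN n)"
  proof (rule sum.reindex_bij_witness[where i=cmpl and j=cmpl])
    fix a assume "a \<in> IrrN n"
    then show "cmpl (cmpl a) = a" "cmpl a \<in> JN n" "w p q (cmpl a) = w q p a"
      unfolding JN_def IrrN_def using cmpl_comp sep_perm sep_comp asc_comp des_comp
      by (auto simp: w_def mult.commute)
  next
    fix a assume "a \<in> JN n"
    then show "cmpl (cmpl a) = a" "cmpl a \<in> IrrN n"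
      unfolding JN_def IrrN_def using cmpl_comp sep_perm sep_comp
      by auto
  qed
  then show "irr_sep_gf q p $ n = J p q $ n" by (simp add: irr_gf_nth J_def)
qed

lemma fps_decomp2: "sep_gf p q = J p q + fps_const q * J p q * sep_gf p q"
  using fps_decomp[of q p] by (simp add: sep_gf_swap irr_swap)

lemma fps_dich: "irr_sep_gf p q + J p q = sep_gf p q + fps_X"
proof (rule fps_ext)
  fix n
  have u: "IrrN n \<union> JN n = SepN n"
    unfolding IrrN_def JN_def SepN_def using dichotomy by auto
  have c1: "cmpl [1] = [1]" by (simp add: cmpl_def)
  have r1: "irreducible_perm [1]" by (simp add: irreducible_perm_def)
  have i: "IrrN n \<inter> JN n = (if n = 1 then {[1]} else {})"
  proof
    show "IrrN n \<inter> JN n \<subseteq> (if n = 1 then {[1]} else {})"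
      unfolding IrrN_def JN_def using both_irr by fastforce
    show "(if n = 1 then {[1]} else {}) \<subseteq> IrrN n \<inter> JN n"
      unfolding IrrN_def JN_def using c1 r1 separable.sep_one by auto
  qed
  have "sum (w p q) (IrrN n) + sum (w p q) (JN n) = sum (w p q) (SepN n) + (if n = 1 then 1 else 0)"
    using sum.union_inter[OF finite_IrrN finite_JN, of "w p q" n, symmetric] u i
    by (simp add: w_def asc_def des_def)
  then show "(irr_sep_gf p q + J p q) $ n = (sep_gf p q + fps_X) $ n"
    by (simp add: irr_gf_nth sep_gf_nth J_def)
qed

lemma sep0: "sep_gf p q $ 0 = 0"
proof -
  have "SepN 0 = {}" using sep_perm by (auto simp: SepN_def)
  then show ?thesis by (simp add: sep_gf_nth)
qed





lemma final:
  fixes p q :: "'a::field"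
  shows "fps_const (p * q) * sep_gf p q ^ 3
           + fps_const (p * q) * fps_X * sep_gf p q ^ 2
           + sep_gf p q * ((fps_const p + fps_const q) * fps_X - 1) + fps_X = 0 \<and>
         irr_sep_gf p q =
           (fps_X + fps_const q * (fps_X + sep_gf p q) * sep_gf p q)
             / (1 + fps_const q * sep_gf p q)"
proof -
  define S where "S = sep_gf p q"
  define I where "I = irr_sep_gf p q"
  define JJ where "JJ = J p q"
  define P where "P = (fps_const p :: 'a fps)"
  define Q where "Q = (fps_const q :: 'a fps)"
  have e1: "S = I + P * I * S" unfolding S_def I_def P_def by (rule fps_decomp)
  have e2: "S = JJ + Q * JJ * S" unfolding S_def JJ_def Q_def by (rule fps_decomp2)
  have e3: "I + JJ = S + fps_X" unfolding S_def JJ_def I_def by (rule fps_dich)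
  have h1: "I * (1 + P * S) = S" using e1 by (simp add: algebra_simps)
  have h2: "JJ * (1 + Q * S) = S" using e2 by (simp add: algebra_simps)
  have "(S + fps_X) * (1 + P * S) * (1 + Q * S) = (I + JJ) * (1 + P * S) * (1 + Q * S)"
    using e3 by simp
  also have "\<dots> = I * (1 + P * S) * (1 + Q * S) + JJ * (1 + Q * S) * (1 + P * S)"
    by (simp add: algebra_simps)
  also have "\<dots> = S * (1 + Q * S) + S * (1 + P * S)" using h1 h2 by simp
  finally have k: "(S + fps_X) * (1 + P * S) * (1 + Q * S) = S * (1 + Q * S) + S * (1 + P * S)" .
  have c: "fps_const (p * q) = P * Q" unfolding P_def Q_def by simp
  have "P * Q * S ^ 3 + P * Q * fps_X * S ^ 2 + S * ((P + Q) * fps_X - 1) + fps_X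
      = (S + fps_X) * (1 + P * S) * (1 + Q * S) - (S * (1 + Q * S) + S * (1 + P * S))"
    by (simp add: algebra_simps power2_eq_square power3_eq_cube)
  also have "\<dots> = 0" using k by simp
  finally have goal1: "P * Q * S ^ 3 + P * Q * fps_X * S ^ 2 + S * ((P + Q) * fps_X - 1) + fps_X = 0" .
  have eI: "I = S + fps_X - JJ" using e3 by (metis add_diff_cancel_right')
  have "I * (1 + Q * S) = (S + fps_X - JJ) * (1 + Q * S)" by (subst eI) (rule refl)
  also have "\<dots> = (S + fps_X) * (1 + Q * S) - S" using h2 by (simp add: algebra_simps)
  also have "\<dots> = fps_X + Q * (fps_X + S) * S" by (simp add: algebra_simps)
  finally have k2: "I * (1 + Q * S) = fps_X + Q * (fps_X + S) * S" .
  have S0: "S $ 0 = 0" unfolding S_def by (rule sep0)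
  have nz: "1 + Q * S \<noteq> 0"
  proof
    assume "1 + Q * S = 0"
    then have "(1 + Q * S) $ 0 = 0" by simp
    then show False using S0 by simp
  qed
  have "I = (I * (1 + Q * S)) / (1 + Q * S)"
    by (rule nonzero_mult_div_cancel_right[symmetric, OF nz])
  then have goal2: "I = (fps_X + Q * (fps_X + S) * S) / (1 + Q * S)"
    unfolding k2 .
  have goal1': "fps_const (p * q) * S ^ 3 + fps_const (p * q) * fps_X * S ^ 2
     + S * ((P + Q) * fps_X - 1) + fps_X = 0"
    using goal1 unfolding c .
  show ?thesis using goal1' goal2 unfolding S_def I_def P_def Q_def by (rule conjI)
qed


theorem theorem4:
  fixes p q :: "'a::field"
  shows "fps_const (p * q) * sep_gf p q ^ 3
           + fps_const (p * q) * fps_X * sep_gf p q ^ 2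
           + sep_gf p q * ((fps_const p + fps_const q) * fps_X - 1) + fps_X = 0 \<and>
         irr_sep_gf p q =
           (fps_X + fps_const q * (fps_X + sep_gf p q) * sep_gf p q)
             / (1 + fps_const q * sep_gf p q)"
  by (rule final)

end
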